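(* Let $\mathbf{u}(\mathbf{x},t)$, $p(\mathbf{x},t)$, $\theta(\mathbf{x},t)$ be smooth solutions of the dimensionless incompressible, stratified, rotating Euler equations $$\frac{D\mathbf{u}}{Dt} + 2\boldsymbol{\Omega}\times\mathbf{u} + a_0\mathbf{k}\theta = -\nabla p,\qquad \operatorname{div}\mathbf{u}=0,\qquad \frac{D\theta}{Dt}=0,$$ where $\frac{D}{Dt}=\frac{\partial}{\partial t}+\mathbf{u}\cdot\nabla$, $\boldsymbol{\Omega}$ is the constant rotation vector, $\mathbf{k}$ the vertical unit vector and $a_0$ a constant. Let $q=(\boldsymbol{\omega}+2\boldsymbol{\Omega})\cdot\nabla\theta$ with $\boldsymbol{\omega}=\operatorname{curl}\mathbf{u}$, let $Q$ be a smooth function of one variable, and set $\boldsymbol{\mathcal{B}}=\nabla Q(q)\times\nabla\theta$, $\mathcal{B}=|\boldsymbol{\mathcal{B}}|$, $\hat{\boldsymbol{\mathcal{B}}}=\boldsymbol{\mathcal{B}}/\mathcal{B}$. Define $\mathbf{a}=\boldsymbol{\mathcal{B}}\cdot\nabla\mathbf{u}$ and $\mathbf{b}=\frac{D\mathbf{a}}{Dt}$ (which equals $-P\boldsymbol{\mathcal{B}}-\boldsymbol{\mathcal{B}}\cdot\nabla(2\boldsymbol{\Omega}\times\mathbf{u}+a_0\mathbf{k}\theta)$, where $P=(\partial^2 p/\partial x_i\partial x_j)$ is the pressure Hessian), and $$\boldsymbol{\chi}_a=\mathcal{B}^{-1}(\hat{\boldsymbol{\mathcal{B}}}\times\mathbf{a}),\qquad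 \boldsymbol{\chi}_b=\mathcal{B}^{-1}(\hat{\boldsymbol{\mathcal{B}}}\times\mathbf{b}),$$ with $\chi_a=|\boldsymbol{\chi}_a|$ and $\hat{\boldsymbol{\chi}}_a=\boldsymbol{\chi}_a/\chi_a$. Then, wherever $\mathcal{B}\neq0$ and $\chi_a\neq0$, the triple $\big(\hat{\boldsymbol{\mathcal{B}}},\,\hat{\boldsymbol{\chi}}_a,\,\hat{\boldsymbol{\mathcal{B}}}\times\hat{\boldsymbol{\chi}}_a\big)$ is an orthonormal frame whose Lagrangian time derivatives satisfy $$\frac{D\hat{\boldsymbol{\mathcal{B}}}}{Dt}=\mathbf{D}_a\times\hat{\boldsymbol{\mathcal{B}}},\qquad \frac{D(\hat{\boldsymbol{\mathcal{B}}}\times\hat{\boldsymbol{\chi}}_a)}{Dt}=\mathbf{D}_a\times(\hat{\boldsymbol{\mathcal{B}}}\times\hat{\boldsymbol{\chi}}_a),\qquad \frac{D\hat{\boldsymbol{\chi}}_a}{Dt}=\mathbf{D}_a\times\hat{\boldsymbol{\chi}}_a,$$ where the Darboux angular velocity vector is $$\mathbf{D}_a=\boldsymbol{\chi}_a+\frac{c_b}{\chi_a}\hat{\boldsymbol{\mathcal{B}}},\qquad c_b=\hat{\boldsymbol{\mathcal{B}}}\cdot(\hat{\boldsymbol{\chi}}_a\times\boldsymbol{\chi}_b).$$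
   Context: All fields are smooth functions of position $\mathbf{x}\in\mathbb{R}^3$ and time $t$. $\frac{D}{Dt}=\partial_t+\mathbf{u}\cdot\nabla$ is the Lagrangian (material) time derivative along the fluid flow. For vectors, $\boldsymbol{\mathcal{B}}\cdot\nabla\mathbf{u}$ denotes the vector with components $\sum_j\mathcal{B}_j\partial_j u_i$. In this setting $\boldsymbol{\mathcal{B}}$ satisfies $\frac{D\boldsymbol{\mathcal{B}}}{Dt}=\boldsymbol{\mathcal{B}}\cdot\nabla\mathbf{u}$ and $\operatorname{div}\boldsymbol{\mathcal{B}}=0$. *)

theory Defs
  imports "HOL-Analysis.Analysis" "HOL-Analysis.Cross3"
begin

text \<open>Smoothness (C-infinity): differentiable everywhere, and every directional
  derivative field is again smooth (coinductively, i.e. to all orders).\<close>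
coinductive smooth :: "('a::real_normed_vector \<Rightarrow> 'b::real_normed_vector) \<Rightarrow> bool" where
  "(\<forall>x. f differentiable (at x)) \<Longrightarrow> (\<forall>v. smooth (\<lambda>x. frechet_derivative f (at x) v))
    \<Longrightarrow> smooth f"

definition smooth_field :: "(real^3 \<Rightarrow> real \<Rightarrow> 'b::real_normed_vector) \<Rightarrow> bool" where
  "smooth_field f \<longleftrightarrow> smooth (\<lambda>z::(real^3) \<times> real. f (fst z) (snd z))"

definition pd :: "3 \<Rightarrow> (real^3 \<Rightarrow> real \<Rightarrow> 'b::real_normed_vector) \<Rightarrow> real^3 \<Rightarrow> real \<Rightarrow> 'b" where
  "pd j f x t = frechet_derivative (\<lambda>y. f y t) (at x) (axis j 1)"

definition pt :: "(real^3 \<Rightarrow> real \<Rightarrow> 'b::real_normed_vector) \<Rightarrow> real^3 \<Rightarrow> real \<Rightarrow> 'b" where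
  "pt f x t = frechet_derivative (\<lambda>s. f x s) (at t) 1"

definition matder :: "(real^3 \<Rightarrow> real \<Rightarrow> real^3) \<Rightarrow> (real^3 \<Rightarrow> real \<Rightarrow> 'b::real_normed_vector)
    \<Rightarrow> real^3 \<Rightarrow> real \<Rightarrow> 'b" where
  "matder u f x t = pt f x t + (\<Sum>j\<in>UNIV. (u x t $ j) *\<^sub>R pd j f x t)"

definition dirder :: "(real^3 \<Rightarrow> real \<Rightarrow> real^3) \<Rightarrow> (real^3 \<Rightarrow> real \<Rightarrow> 'b::real_normed_vector)
    \<Rightarrow> real^3 \<Rightarrow> real \<Rightarrow> 'b" where
  "dirder V f x t = (\<Sum>j\<in>UNIV. (V x t $ j) *\<^sub>R pd j f x t)"

definition grad :: "(real^3 \<Rightarrow> real \<Rightarrow> real) \<Rightarrow> real^3 \<Rightarrow> real \<Rightarrow> real^3" where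
  "grad f x t = (\<chi> j. pd j f x t)"

definition divg :: "(real^3 \<Rightarrow> real \<Rightarrow> real^3) \<Rightarrow> real^3 \<Rightarrow> real \<Rightarrow> real" where
  "divg v x t = (\<Sum>j\<in>UNIV. pd j (\<lambda>y s. v y s $ j) x t)"

definition curl :: "(real^3 \<Rightarrow> real \<Rightarrow> real^3) \<Rightarrow> real^3 \<Rightarrow> real \<Rightarrow> real^3" where
  "curl v x t = vector [
     pd 2 (\<lambda>y s. v y s $ 3) x t - pd 3 (\<lambda>y s. v y s $ 2) x t,
     pd 3 (\<lambda>y s. v y s $ 1) x t - pd 1 (\<lambda>y s. v y s $ 3) x t,
     pd 1 (\<lambda>y s. v y s $ 2) x t - pd 2 (\<lambda>y s. v y s $ 1) x t]"

definition hessian :: "(real^3 \<Rightarrow> real \<Rightarrow> real) \<Rightarrow> real^3 \<Rightarrow> real \<Rightarrow> real^3^3" where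
  "hessian p x t = (\<chi> i j. pd i (pd j p) x t)"

definition kvec :: "real^3" where "kvec = axis 3 1"

end

theory Submission
  imports Defs
begin


lemma smooth_diff: "smooth f \<Longrightarrow> f differentiable (at x)"
  by (erule smooth.cases) auto

lemma smooth_deriv: "smooth f \<Longrightarrow> smooth (\<lambda>x. frechet_derivative f (at x) v)"
  by (erule smooth.cases) auto

lemma smooth_const: "smooth (\<lambda>x. c)"
proof -
  have "\<exists>c. f = (\<lambda>x. c) \<Longrightarrow> smooth f" for f :: "'a::real_normed_vector \<Rightarrow> 'b::real_normed_vector"
  proof (coinduction arbitrary: f)
    case smooth
    then obtain c where f: "f = (\<lambda>x. c)" by blast
    have d: "frechet_derivative f (at x) = (\<lambda>h. 0)" for x
      unfolding f by (rule frechet_derivative_at[symmetric]) (rule has_derivative_const)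
    show ?case unfolding d using f by (auto intro: differentiableI has_derivative_const)
  qed
  then show ?thesis by blast
qed

lemma smooth_linear:
  assumes L: "bounded_linear L" and f: "smooth f"
  shows "smooth (\<lambda>x. L (f x))"
proof -
  have "\<exists>f. smooth f \<and> h = (\<lambda>x. L (f x)) \<Longrightarrow> smooth h" for h
  proof (coinduction arbitrary: h)
    case smooth
    then obtain f where f: "smooth f" and h: "h = (\<lambda>x. L (f x))" by blast
    have fd: "(f has_derivative frechet_derivative f (at x)) (at x)" for x
      using smooth_diff[OF f] frechet_derivative_works by blast
    have d: "frechet_derivative (\<lambda>x. L (f x)) (at x) = (\<lambda>v. L (frechet_derivative f (at x) v))" for x
      by (rule frechet_derivative_at[symmetric]) (rule bounded_linear.has_derivative[OF L fd])
    have 1: "\<forall>x. h differentiable at x" unfolding h using bounded_linear.has_derivative[OF L fd]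
        by (blast intro: differentiableI)
    have 2: "\<forall>v. \<exists>f'. smooth f' \<and> (\<lambda>x. frechet_derivative h (at x) v) = (\<lambda>x. L (f' x))"
        unfolding h d using smooth_deriv[OF f] by blast
    show ?case using 1 2 by blast
  qed
  with f show ?thesis by blast
qed

lemma smooth_add:
  assumes f: "smooth f" and g: "smooth g"
  shows "smooth (\<lambda>x. f x + g x)"
proof -
  have "\<exists>f g. smooth f \<and> smooth g \<and> h = (\<lambda>x. f x + g x) \<Longrightarrow> smooth h" for h
  proof (coinduction arbitrary: h)
    case smooth
    then obtain f g where f: "smooth f" and g: "smooth g" and h: "h = (\<lambda>x. f x + g x)" by blast
    have fd: "(f has_derivative frechet_derivative f (at x)) (at x)" for x
      using smooth_diff[OF f] frechet_derivative_works by blast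
    have gd: "(g has_derivative frechet_derivative g (at x)) (at x)" for x
      using smooth_diff[OF g] frechet_derivative_works by blast
    have d: "frechet_derivative (\<lambda>x. f x + g x) (at x) = (\<lambda>v. frechet_derivative f (at x) v + frechet_derivative g (at x) v)" for x
      by (rule frechet_derivative_at[symmetric]) (rule has_derivative_add[OF fd gd])
    have 1: "\<forall>x. h differentiable at x" unfolding h using has_derivative_add[OF fd gd]
        by (blast intro: differentiableI)
    have 2: "\<forall>v. \<exists>f' g'. smooth f' \<and> smooth g' \<and> (\<lambda>x. frechet_derivative h (at x) v) = (\<lambda>x. f' x + g' x)"
        unfolding h d using smooth_deriv[OF f] smooth_deriv[OF g] by blast
    show ?case using 1 2 by blast
  qed
  with f g show ?thesis by blast
qed

inductive bilcl :: "('b::real_normed_vector \<Rightarrow> 'c::real_normed_vector \<Rightarrow> 'd::real_normed_vector)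
   \<Rightarrow> ('a::real_normed_vector \<Rightarrow> 'd) \<Rightarrow> bool" for pr where
  base: "smooth f \<Longrightarrow> smooth g \<Longrightarrow> bilcl pr (\<lambda>z. pr (f z) (g z))"
| plus: "bilcl pr h1 \<Longrightarrow> bilcl pr h2 \<Longrightarrow> bilcl pr (\<lambda>z. h1 z + h2 z)"

lemma bilcl_step:
  fixes h :: "'a::real_normed_vector \<Rightarrow> 'd::real_normed_vector"
  assumes P: "bounded_bilinear pr" and h: "bilcl pr h"
  shows "(h has_derivative frechet_derivative h (at x)) (at x) \<and> (\<forall>v. bilcl pr (\<lambda>z. frechet_derivative h (at z) v))"
  using h
proof (induction arbitrary: x)
  case (base f g)
  have fd: "(f has_derivative frechet_derivative f (at x)) (at x)" for x
    using smooth_diff[OF base(1)] frechet_derivative_works by blast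
  have gd: "(g has_derivative frechet_derivative g (at x)) (at x)" for x
    using smooth_diff[OF base(2)] frechet_derivative_works by blast
  have D: "((\<lambda>z. pr (f z) (g z)) has_derivative
     (\<lambda>v. pr (f x) (frechet_derivative g (at x) v) + pr (frechet_derivative f (at x) v) (g x))) (at x)" for x
    by (rule bounded_bilinear.FDERIV[OF P fd gd])
  have d: "frechet_derivative (\<lambda>z. pr (f z) (g z)) (at x) = 
     (\<lambda>v. pr (f x) (frechet_derivative g (at x) v) + pr (frechet_derivative f (at x) v) (g x))" for x
    by (rule frechet_derivative_at[symmetric]) (rule D)
  show ?case unfolding d using D
    by (auto intro!: bilcl.intros smooth_deriv base)
next
  case (plus h1 h2)
  have d: "frechet_derivative (\<lambda>z. h1 z + h2 z) (at x) = 
     (\<lambda>v. frechet_derivative h1 (at x) v + frechet_derivative h2 (at x) v)" for x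
    by (rule frechet_derivative_at[symmetric]) (rule has_derivative_add; use plus in blast)
  show ?case unfolding d using plus
    by (auto intro!: bilcl.intros has_derivative_add)
qed

lemma smooth_bilinear:
  assumes P: "bounded_bilinear pr" and f: "smooth f" and g: "smooth g"
  shows "smooth (\<lambda>x. pr (f x) (g x))"
proof -
  have *: "bilcl pr h \<Longrightarrow> smooth h" for h
  proof (coinduction arbitrary: h)
    case smooth
    then show ?case using bilcl_step[OF P smooth] by (auto intro: differentiableI)
  qed
  show ?thesis by (rule *) (rule bilcl.base[OF f g])
qed

lemma smooth_mult: "smooth f \<Longrightarrow> smooth g \<Longrightarrow> smooth (\<lambda>x. (f x :: real) * g x)"
  by (rule smooth_bilinear[OF bounded_bilinear_mult])

lemma real_lin1: "bounded_linear f \<Longrightarrow> f (s::real) = s * (f 1 :: real)"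
proof -
  assume "bounded_linear f"
  then interpret bounded_linear f .
  have "f (s *\<^sub>R 1) = s *\<^sub>R f 1" by (rule scale)
  then show ?thesis by simp
qed

inductive compcl :: "('a::real_normed_vector \<Rightarrow> real) \<Rightarrow> ('a \<Rightarrow> real) \<Rightarrow> bool" for q where
  base: "smooth (g :: real \<Rightarrow> real) \<Longrightarrow> smooth k \<Longrightarrow> compcl q (\<lambda>z. g (q z) * k z)"
| plus: "compcl q h1 \<Longrightarrow> compcl q h2 \<Longrightarrow> compcl q (\<lambda>z. h1 z + h2 z)"

lemma compcl_step:
  assumes q: "smooth q" and h: "compcl q h"
  shows "(h has_derivative frechet_derivative h (at x)) (at x) \<and> (\<forall>v. compcl q (\<lambda>z. frechet_derivative h (at z) v))"
  using h
proof (induction arbitrary: x)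
  case (base g k)
  have gd: "(g has_derivative frechet_derivative g (at x)) (at x)" for x
    using smooth_diff[OF base(1)] frechet_derivative_works by blast
  have kd: "(k has_derivative frechet_derivative k (at x)) (at x)" for x
    using smooth_diff[OF base(2)] frechet_derivative_works by blast
  have qd: "(q has_derivative frechet_derivative q (at x)) (at x)" for x
    using smooth_diff[OF q] frechet_derivative_works by blast
  have gl: "frechet_derivative g (at w) s = s * frechet_derivative g (at w) 1" for w s
    by (rule real_lin1) (rule has_derivative_bounded_linear[OF gd])
  have gq: "((\<lambda>z. g (q z)) has_derivative (\<lambda>v. frechet_derivative g (at (q x)) (frechet_derivative q (at x) v))) (at x)" for x
    using diff_chain_at[OF qd gd] by (simp add: o_def)
  have D: "((\<lambda>z. g (q z) * k z) has_derivative
     (\<lambda>v. g (q x) * (frechet_derivative k (at x) v) + (frechet_derivative g (at (q x)) 1) * (frechet_derivative q (at x) v * k x))) (at x)" for x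
  proof -
    have gl2: "frechet_derivative g (at (q x)) (frechet_derivative q (at x) v) = frechet_derivative q (at x) v * frechet_derivative g (at (q x)) 1" for v
      by (rule gl)
    show ?thesis using has_derivative_mult[OF gq[of x] kd[of x]] by (simp add: gl2 algebra_simps)
  qed
  have d: "frechet_derivative (\<lambda>z. g (q z) * k z) (at x) = 
     (\<lambda>v. g (q x) * (frechet_derivative k (at x) v) + (frechet_derivative g (at (q x)) 1) * (frechet_derivative q (at x) v * k x))" for x
    by (rule frechet_derivative_at[symmetric]) (rule D)
  have s1: "smooth (\<lambda>w. frechet_derivative g (at w) 1)" by (rule smooth_deriv[OF base(1)])
  have s2: "smooth (\<lambda>x. frechet_derivative q (at x) v * k x)" for v
    by (rule smooth_mult[OF smooth_deriv[OF q] base(2)])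
  have c: "compcl q (\<lambda>z. frechet_derivative (\<lambda>z. g (q z) * k z) (at z) v)" for v
    unfolding d
    by (rule compcl.plus; rule compcl.base; (rule s1 s2 base(1) smooth_deriv[OF base(2)])?)
  show ?case using D d c by metis
next
  case (plus h1 h2)
  have d: "frechet_derivative (\<lambda>z. h1 z + h2 z) (at x) = 
     (\<lambda>v. frechet_derivative h1 (at x) v + frechet_derivative h2 (at x) v)" for x
    by (rule frechet_derivative_at[symmetric]) (rule has_derivative_add; use plus in blast)
  show ?case unfolding d using plus
    by (auto intro!: compcl.intros has_derivative_add)
qed

lemma smooth_comp1:
  assumes Q: "smooth (Q :: real \<Rightarrow> real)" and q: "smooth q"
  shows "smooth (\<lambda>x. Q (q x))"
proof -
  have *: "compcl q h \<Longrightarrow> smooth h" for h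
  proof (coinduction arbitrary: h)
    case smooth
    then show ?case using compcl_step[OF q smooth] by (auto intro: differentiableI)
  qed
  have "compcl q (\<lambda>x. Q (q x) * 1)" by (rule compcl.base[OF Q smooth_const])
  then show ?thesis using * by simp
qed

lemma mvt_lin:
  fixes f :: "real \<Rightarrow> 'b::real_normed_vector"
  assumes h: "0 \<le> h"
    and d: "\<And>r. r \<in> {0..h} \<Longrightarrow> (f has_vector_derivative f' r) (at r within {0..h})"
    and b: "\<And>r. r \<in> {0..h} \<Longrightarrow> norm (f' r - C) \<le> B"
  shows "norm (f h - f 0 - h *\<^sub>R C) \<le> h * B"
proof -
  have g: "((\<lambda>r. f r - r *\<^sub>R C) has_derivative (\<lambda>k. k *\<^sub>R (f' r - C))) (at r within {0..h})"
    if "r \<in> {0..h}" for r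
    using d[OF that] unfolding has_vector_derivative_def
    by (auto intro!: derivative_eq_intros simp: algebra_simps)
  have o: "onorm (\<lambda>k::real. k *\<^sub>R (f' r - C)) \<le> B" if "r \<in> {0..h}" for r
  proof (rule onorm_le)
    fix x :: real
    have "\<bar>x\<bar> * norm (f' r - C) \<le> \<bar>x\<bar> * B" using b[OF that] by (simp add: mult_left_mono)
    then show "norm (x *\<^sub>R (f' r - C)) \<le> B * norm x" by (simp add: mult.commute)
  qed
  have "norm ((f h - h *\<^sub>R C) - (f 0 - 0 *\<^sub>R C)) \<le> B * norm (h - 0)"
    by (rule differentiable_bound[OF convex_real_interval(5) g o]) (use h in auto)
  then show ?thesis using h by (simp add: algebra_simps)
qed

lemma vd_line:
  assumes "(G has_derivative DG) (at (c + r *\<^sub>R w))"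
  shows "((\<lambda>r. G (c + r *\<^sub>R w)) has_vector_derivative DG w) (at r within S)"
proof -
  have l: "((\<lambda>r. c + r *\<^sub>R w) has_derivative (\<lambda>k. k *\<^sub>R w)) (at r within S)"
    by (auto intro!: derivative_eq_intros)
  have lin: "linear DG" using assms by (rule has_derivative_linear)
  have "((\<lambda>r. G (c + r *\<^sub>R w)) has_derivative (\<lambda>k. DG (k *\<^sub>R w))) (at r within S)"
    by (rule has_derivative_compose[OF l assms])
  then show ?thesis unfolding has_vector_derivative_def
    by (simp add: linear_cmul[OF lin])
qed

lemma second_est:
  fixes F :: "'a::real_normed_vector \<Rightarrow> 'b::real_normed_vector"
  assumes sF: "smooth F"
    and cont: "\<And>z. norm (z - z0) < \<delta> \<Longrightarrow>
       norm (frechet_derivative (\<lambda>z. frechet_derivative F (at z) v) (at z) w - H0) \<le> \<epsilon>"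
    and h: "0 < h" "h * (norm v + norm w) < \<delta>"
  shows "norm (F (z0 + h *\<^sub>R w + h *\<^sub>R v) - F (z0 + h *\<^sub>R v) - F (z0 + h *\<^sub>R w) + F z0
           - h *\<^sub>R h *\<^sub>R H0) \<le> h * (h * \<epsilon>)"
proof -
  define G where "G = (\<lambda>z. frechet_derivative F (at z) v)"
  have FD: "(F has_derivative frechet_derivative F (at z)) (at z)" for z
    using smooth_diff[OF sF] frechet_derivative_works by blast
  have sG: "smooth G" unfolding G_def by (rule smooth_deriv[OF sF])
  have GD: "(G has_derivative frechet_derivative G (at z)) (at z)" for z
    using smooth_diff[OF sG] frechet_derivative_works by blast
  have step1: "norm (G (z0 + s *\<^sub>R v + h *\<^sub>R w) - G (z0 + s *\<^sub>R v) - h *\<^sub>R H0) \<le> h * \<epsilon>"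
    if s: "s \<in> {0..h}" for s
  proof -
    have "norm (G (z0 + s *\<^sub>R v + h *\<^sub>R w) - G (z0 + s *\<^sub>R v + 0 *\<^sub>R w) - h *\<^sub>R H0) \<le> h * \<epsilon>"
    proof (rule mvt_lin[where f = "\<lambda>r. G (z0 + s *\<^sub>R v + r *\<^sub>R w)"])
      show "0 \<le> h" using h by simp
      show "((\<lambda>r. G (z0 + s *\<^sub>R v + r *\<^sub>R w)) has_vector_derivative
              frechet_derivative G (at (z0 + s *\<^sub>R v + r *\<^sub>R w)) w) (at r within {0..h})" for r
        by (rule vd_line[OF GD])
      show "norm (frechet_derivative G (at (z0 + s *\<^sub>R v + r *\<^sub>R w)) w - H0) \<le> \<epsilon>"
        if r: "r \<in> {0..h}" for r
      proof (unfold G_def, rule cont)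
        have "norm (z0 + s *\<^sub>R v + r *\<^sub>R w - z0) \<le> norm (s *\<^sub>R v) + norm (r *\<^sub>R w)"
          by (metis add_diff_cancel_left' add.assoc norm_triangle_ineq)
        also have "\<dots> = s * norm v + r * norm w" using s r by simp
        also have "\<dots> \<le> h * norm v + h * norm w"
          using s r by (intro add_mono mult_right_mono) auto
        finally show "norm (z0 + s *\<^sub>R v + r *\<^sub>R w - z0) < \<delta>" using h by (simp add: algebra_simps)
      qed
    qed
    then show ?thesis by simp
  qed
  have "norm ((F (z0 + h *\<^sub>R w + h *\<^sub>R v) - F (z0 + h *\<^sub>R v)) - (F (z0 + h *\<^sub>R w + 0 *\<^sub>R v) - F (z0 + 0 *\<^sub>R v))
           - h *\<^sub>R (h *\<^sub>R H0)) \<le> h * (h * \<epsilon>)"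
  proof (rule mvt_lin[where f = "\<lambda>s. F (z0 + h *\<^sub>R w + s *\<^sub>R v) - F (z0 + s *\<^sub>R v)"])
    show "0 \<le> h" using h by simp
    show "((\<lambda>s. F (z0 + h *\<^sub>R w + s *\<^sub>R v) - F (z0 + s *\<^sub>R v)) has_vector_derivative
            G (z0 + h *\<^sub>R w + r *\<^sub>R v) - G (z0 + r *\<^sub>R v)) (at r within {0..h})" for r
      unfolding G_def by (rule has_vector_derivative_diff; rule vd_line[OF FD])
    show "norm (G (z0 + h *\<^sub>R w + r *\<^sub>R v) - G (z0 + r *\<^sub>R v) - h *\<^sub>R H0) \<le> h * \<epsilon>"
      if r: "r \<in> {0..h}" for r
      using step1[OF r] by (simp add: algebra_simps)
  qed
  then show ?thesis by (simp add: algebra_simps)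
qed

lemma schwarz:
  fixes F :: "'a::real_normed_vector \<Rightarrow> 'b::real_normed_vector"
  assumes sF: "smooth F"
  shows "frechet_derivative (\<lambda>z. frechet_derivative F (at z) v) (at z0) w
       = frechet_derivative (\<lambda>z. frechet_derivative F (at z) w) (at z0) v"
    (is "?A = ?B")
proof -
  define H1 where "H1 = (\<lambda>z. frechet_derivative (\<lambda>z. frechet_derivative F (at z) v) (at z) w)"
  define H2 where "H2 = (\<lambda>z. frechet_derivative (\<lambda>z. frechet_derivative F (at z) w) (at z) v)"
  have c1: "continuous (at z0) H1" unfolding H1_def
    by (rule differentiable_imp_continuous_within, rule smooth_diff, rule smooth_deriv, rule smooth_deriv[OF sF])
  have c2: "continuous (at z0) H2" unfolding H2_def
    by (rule differentiable_imp_continuous_within, rule smooth_diff, rule smooth_deriv, rule smooth_deriv[OF sF])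
  have le: "norm (?A - ?B) \<le> 2 * e" if e: "e > 0" for e
  proof -
    obtain d1 where d1: "d1 > 0" "\<And>z. dist z z0 < d1 \<Longrightarrow> dist (H1 z) (H1 z0) < e"
      using c1 e unfolding continuous_at_eps_delta by blast
    obtain d2 where d2: "d2 > 0" "\<And>z. dist z z0 < d2 \<Longrightarrow> dist (H2 z) (H2 z0) < e"
      using c2 e unfolding continuous_at_eps_delta by blast
    define d where "d = min d1 d2"
    define h where "h = d / (2 * (norm v + norm w + 1))"
    have dpos: "d > 0" using d1 d2 by (simp add: d_def)
    have hpos: "h > 0" unfolding h_def using dpos
      by (intro divide_pos_pos mult_pos_pos) (auto intro: add_nonneg_pos)
    have hd: "h * (norm v + norm w) < d"
    proof -
      have "h * (norm v + norm w) \<le> h * (norm v + norm w + 1)" using hpos by simp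
      also have "\<dots> = d / 2"
      proof -
        have "norm v + norm w + 1 > 0" by (simp add: add_nonneg_pos)
        then show ?thesis unfolding h_def by (simp add: field_simps)
      qed
      finally show ?thesis using dpos by simp
    qed
    have hd': "h * (norm w + norm v) < d" using hd by (simp add: add.commute)
    have E1: "norm (F (z0 + h *\<^sub>R w + h *\<^sub>R v) - F (z0 + h *\<^sub>R v) - F (z0 + h *\<^sub>R w) + F z0
           - h *\<^sub>R h *\<^sub>R ?A) \<le> h * (h * e)"
    proof (rule second_est[OF sF _ hpos hd])
      fix z assume "norm (z - z0) < d"
      then have "dist z z0 < d1" by (simp add: d_def dist_norm)
      from d1(2)[OF this] show "norm (frechet_derivative (\<lambda>z. frechet_derivative F (at z) v) (at z) w - ?A) \<le> e"
        by (simp add: H1_def dist_norm)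
    qed
    have E2: "norm (F (z0 + h *\<^sub>R v + h *\<^sub>R w) - F (z0 + h *\<^sub>R w) - F (z0 + h *\<^sub>R v) + F z0
           - h *\<^sub>R h *\<^sub>R ?B) \<le> h * (h * e)"
    proof (rule second_est[OF sF _ hpos hd'])
      fix z assume "norm (z - z0) < d"
      then have "dist z z0 < d2" by (simp add: d_def dist_norm)
      from d2(2)[OF this] show "norm (frechet_derivative (\<lambda>z. frechet_derivative F (at z) w) (at z) v - ?B) \<le> e"
        by (simp add: H2_def dist_norm)
    qed
    have eq: "z0 + h *\<^sub>R v + h *\<^sub>R w = z0 + h *\<^sub>R w + h *\<^sub>R v" by (simp add: algebra_simps)
    define \<Delta> where "\<Delta> = F (z0 + h *\<^sub>R w + h *\<^sub>R v) - F (z0 + h *\<^sub>R v) - F (z0 + h *\<^sub>R w) + F z0"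
    have E1': "norm (\<Delta> - (h*h) *\<^sub>R ?A) \<le> h * (h * e)" using E1 by (simp add: \<Delta>_def)
    have E2': "norm (\<Delta> - (h*h) *\<^sub>R ?B) \<le> h * (h * e)" using E2 unfolding eq \<Delta>_def
      by (simp add: algebra_simps)
    have "norm ((h*h) *\<^sub>R (?A - ?B)) = norm ((\<Delta> - (h*h) *\<^sub>R ?B) - (\<Delta> - (h*h) *\<^sub>R ?A))"
      by (simp add: algebra_simps)
    also have "\<dots> \<le> norm (\<Delta> - (h*h) *\<^sub>R ?B) + norm (\<Delta> - (h*h) *\<^sub>R ?A)" by (rule norm_triangle_ineq4)
    also have "\<dots> \<le> (h*h) * (2*e)" using E1' E2' by simp
    finally have "(h*h) * norm (?A - ?B) \<le> (h*h) * (2*e)" using hpos by simp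
    then show ?thesis using hpos by (simp add: mult_le_cancel_left_pos)
  qed
  show ?thesis
  proof (rule ccontr)
    assume "?A \<noteq> ?B"
    then have p: "norm (?A - ?B) > 0" by simp
    have "norm (?A - ?B) \<le> 2 * (norm (?A - ?B) / 4)" by (rule le) (use p in simp)
    then show False using p by simp
  qed
qed



lemma bounded_bilinear_cross: "bounded_bilinear (cross3)"
proof -
  obtain K where K: "\<forall>x y. norm (cross3 x y) \<le> K * norm x * norm y"
    using bilinear_bounded[OF bilinear_cross] by blast
  show ?thesis
  proof
    show "\<exists>K. \<forall>a b. norm (cross3 a b) \<le> norm a * norm b * K"
      using K by (metis mult.commute mult.left_commute)
  qed (simp_all add: cross_add_left cross_add_right cross_mult_left cross_mult_right)
qed

definition Fz :: "(real^3 \<Rightarrow> real \<Rightarrow> 'b) \<Rightarrow> ((real^3) \<times> real \<Rightarrow> 'b)" where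
  "Fz f = (\<lambda>z. f (fst z) (snd z))"

definition dv :: "((real^3) \<times> real) \<Rightarrow> (real^3 \<Rightarrow> real \<Rightarrow> 'b::real_normed_vector) \<Rightarrow> real^3 \<Rightarrow> real \<Rightarrow> 'b" where
  "dv W f x t = frechet_derivative (Fz f) (at (x,t)) W"

lemma sf_Fz: "smooth_field f = smooth (Fz f)"
  by (simp add: smooth_field_def Fz_def)

lemma Fz_app[simp]: "Fz f (x,t) = f x t" by (simp add: Fz_def)

lemma sf_diff: "smooth_field f \<Longrightarrow> (Fz f has_derivative frechet_derivative (Fz f) (at z)) (at z)"
  using smooth_diff frechet_derivative_works sf_Fz by blast

lemma pd_dv:
  assumes d: "(Fz f has_derivative D) (at (x,t))"
  shows "pd j f x t = D (axis j 1, 0)"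
proof -
  have l: "((\<lambda>y. (y,t)) has_derivative (\<lambda>h. (h, 0))) (at x)"
    by (auto intro!: derivative_eq_intros)
  have "((\<lambda>y. Fz f (y,t)) has_derivative (\<lambda>h. D (h,0))) (at x)"
    by (rule has_derivative_compose[OF l]) (use d in simp)
  then have "((\<lambda>y. f y t) has_derivative (\<lambda>h. D (h,0))) (at x)" by simp
  from frechet_derivative_at[OF this, symmetric] show ?thesis by (simp add: pd_def)
qed

lemma pt_dv:
  assumes d: "(Fz f has_derivative D) (at (x,t))"
  shows "pt f x t = D (0, 1)"
proof -
  have l: "((\<lambda>s. (x,s)) has_derivative (\<lambda>h. (0, h))) (at t)"
    by (auto intro!: derivative_eq_intros)
  have "((\<lambda>s. Fz f (x,s)) has_derivative (\<lambda>h. D (0,h))) (at t)"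
    by (rule has_derivative_compose[OF l]) (use d in simp)
  then have "((\<lambda>s. f x s) has_derivative (\<lambda>h. D (0,h))) (at t)" by simp
  from frechet_derivative_at[OF this, symmetric] show ?thesis by (simp add: pt_def)
qed

lemma vec_decomp: "(v::real^3) = (\<Sum>j\<in>UNIV. (v $ j) *\<^sub>R axis j 1)"
  by (simp add: vec_eq_iff sum_3 axis_def forall_3)

lemma matder_dv:
  assumes d: "(Fz f has_derivative D) (at (x,t))"
  shows "matder u f x t = D (u x t, 1)"
proof -
  interpret linear D using has_derivative_linear[OF d] .
  have hs: "D (c *\<^sub>R a, 0) = c *\<^sub>R D (a, 0)" for c a
    using scale[of c "(a,0)"] by simp
  have "(u x t, 1::real) = (0,1) + (\<Sum>j\<in>UNIV. (u x t $ j) *\<^sub>R (axis j 1, 0::real))"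
    by (subst vec_decomp[of "u x t"]) (simp add: sum_prod sum_3)
  then have "D (u x t, 1) = D (0,1) + (\<Sum>j\<in>UNIV. (u x t $ j) *\<^sub>R D (axis j 1, 0))"
    by (simp add: add sum hs)
  then show ?thesis unfolding matder_def pt_dv[OF d] pd_dv[OF d] by simp
qed

lemma dirder_dv:
  assumes d: "(Fz f has_derivative D) (at (x,t))"
  shows "dirder V f x t = D (V x t, 0)"
proof -
  interpret linear D using has_derivative_linear[OF d] .
  have hs: "D (c *\<^sub>R a, 0) = c *\<^sub>R D (a, 0)" for c a
    using scale[of c "(a,0)"] by simp
  have "(V x t, 0::real) = (\<Sum>j\<in>UNIV. (V x t $ j) *\<^sub>R (axis j 1, 0::real))"
    by (subst vec_decomp[of "V x t"]) (simp add: sum_prod sum_3)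
  then have "D (V x t, 0) = (\<Sum>j\<in>UNIV. (V x t $ j) *\<^sub>R D (axis j 1, 0))"
    by (simp add: sum hs)
  then show ?thesis unfolding dirder_def pd_dv[OF d] by simp
qed



abbreviation "E j \<equiv> (axis j (1::real) :: real^3, 0::real)"
abbreviation "T \<equiv> (0::real^3, 1::real)"

lemma Fz_lam: "Fz (\<lambda>y s. g y s) = (\<lambda>z. g (fst z) (snd z))" by (simp add: Fz_def)
lemma Fz_apply: "Fz g z = g (fst z) (snd z)" by (simp add: Fz_def)

lemma sf_const: "smooth_field (\<lambda>y s. c)"
  unfolding smooth_field_def by (rule smooth_const)

lemma sf_add: "smooth_field f \<Longrightarrow> smooth_field g \<Longrightarrow> smooth_field (\<lambda>y s. f y s + g y s)"
  unfolding smooth_field_def by (rule smooth_add)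

lemma sf_bil: "bounded_bilinear pr \<Longrightarrow> smooth_field f \<Longrightarrow> smooth_field g \<Longrightarrow> smooth_field (\<lambda>y s. pr (f y s) (g y s))"
  unfolding smooth_field_def by (rule smooth_bilinear)

lemma sf_lin: "bounded_linear L \<Longrightarrow> smooth_field f \<Longrightarrow> smooth_field (\<lambda>y s. L (f y s))"
  unfolding smooth_field_def by (rule smooth_linear)

lemma sf_comp: "smooth (Q :: real \<Rightarrow> real) \<Longrightarrow> smooth_field (q :: _ \<Rightarrow> _ \<Rightarrow> real) \<Longrightarrow> smooth_field (\<lambda>y s. Q (q y s))"
  unfolding smooth_field_def by (rule smooth_comp1)

lemma sf_dv: "smooth_field f \<Longrightarrow> smooth_field (\<lambda>x t. dv W f x t)"
proof -
  assume "smooth_field f"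
  then have "smooth (\<lambda>z. frechet_derivative (Fz f) (at z) W)" by (simp add: sf_Fz smooth_deriv)
  moreover have "Fz (\<lambda>x t. dv W f x t) = (\<lambda>z. frechet_derivative (Fz f) (at z) W)"
    by (rule ext) (simp only: Fz_apply dv_def prod.collapse)
  ultimately show ?thesis by (simp add: sf_Fz)
qed

lemma pd_eq: "smooth_field f \<Longrightarrow> pd j f = (\<lambda>x t. dv (E j) f x t)"
  by (intro ext) (simp add: dv_def pd_dv[OF sf_diff])

lemma pt_eq: "smooth_field f \<Longrightarrow> pt f = (\<lambda>x t. dv T f x t)"
  by (intro ext) (simp add: dv_def pt_dv[OF sf_diff])

lemma matder_eq: "smooth_field f \<Longrightarrow> matder u f x t = dv (u x t, 1) f x t"
  by (simp add: dv_def matder_dv[OF sf_diff])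

lemma dirder_eq: "smooth_field f \<Longrightarrow> dirder V f x t = dv (V x t, 0) f x t"
  by (simp add: dv_def dirder_dv[OF sf_diff])

lemma sf_pd: "smooth_field f \<Longrightarrow> smooth_field (pd j f)"
  by (simp add: pd_eq sf_dv)

lemma sf_comp_nth: "smooth_field f \<Longrightarrow> smooth_field (\<lambda>y s. f y s $ j)"
  by (rule sf_lin[OF bounded_linear_vec_nth])

lemma sf_scaleR: "smooth_field f \<Longrightarrow> smooth_field g \<Longrightarrow> smooth_field (\<lambda>y s. f y s *\<^sub>R g y s)"
  by (rule sf_bil[OF bounded_bilinear_scaleR])

lemma vec3_decomp: "(\<chi> j. g j) = g 1 *\<^sub>R axis 1 (1::real) + g 2 *\<^sub>R axis 2 1 + (g 3 :: real) *\<^sub>R (axis 3 1 :: real^3)"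
  by (simp add: vec_eq_iff forall_3 axis_def)

lemma sf_chi: "(\<And>j. smooth_field (g j)) \<Longrightarrow> smooth_field (\<lambda>y s. (\<chi> j. g j y s) :: real^3)"
  unfolding vec3_decomp
  by (rule sf_add sf_scaleR sf_const | assumption)+

lemma vector3_decomp: "vector [a,b,c] = a *\<^sub>R axis 1 (1::real) + b *\<^sub>R axis 2 1 + (c :: real) *\<^sub>R (axis 3 1 :: real^3)"
  by (simp add: vec_eq_iff forall_3 axis_def)

lemma sf_vector3: "smooth_field a \<Longrightarrow> smooth_field b \<Longrightarrow> smooth_field c \<Longrightarrow>
   smooth_field (\<lambda>y s. vector [a y s, b y s, c y s] :: real^3)"
  unfolding vector3_decomp
  by (rule sf_add sf_scaleR sf_const | assumption)+

lemma sf_grad: "smooth_field f \<Longrightarrow> smooth_field (grad f)"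
  unfolding grad_def by (rule sf_chi) (rule sf_pd)

lemma sf_curl: assumes v: "smooth_field v" shows "smooth_field (curl v)"
proof -
  have m: "smooth_field (\<lambda>y s. pd i (\<lambda>y s. v y s $ k) y s - pd j (\<lambda>y s. v y s $ l) y s)" 
    if "smooth_field v" for i j k l
  proof -
    have "smooth_field (\<lambda>y s. pd i (\<lambda>y s. v y s $ k) y s + (-1::real) *\<^sub>R pd j (\<lambda>y s. v y s $ l) y s)"
      by (rule sf_add, rule sf_pd, rule sf_comp_nth, rule that, rule sf_scaleR, rule sf_const, rule sf_pd, rule sf_comp_nth, rule that)
    then show ?thesis by simp
  qed
  show ?thesis unfolding curl_def[abs_def] by (rule sf_vector3; rule m[OF v])
qed

lemma sf_sum3: "(\<And>j. smooth_field (g j)) \<Longrightarrow> smooth_field (\<lambda>y s. \<Sum>(j::3)\<in>UNIV. (g j y s :: 'b::real_normed_vector))"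
  unfolding sum_3 by (rule sf_add | assumption)+

lemma dv_add: "smooth_field f \<Longrightarrow> smooth_field g \<Longrightarrow> dv W (\<lambda>y s. f y s + g y s) x t = dv W f x t + dv W g x t"
  unfolding dv_def Fz_lam
  by (rule frechet_derivative_at[symmetric, THEN fun_cong])
    (use has_derivative_add[OF sf_diff[of f] sf_diff[of g]] in \<open>simp add: Fz_def\<close>)

lemma Fz_dv: "Fz (\<lambda>x t. dv W f x t) = (\<lambda>z. frechet_derivative (Fz f) (at z) W)"
  by (rule ext) (simp only: Fz_apply dv_def prod.collapse)

lemma dv_swap: "smooth_field f \<Longrightarrow> dv W (\<lambda>x t. dv V f x t) x t = dv V (\<lambda>x t. dv W f x t) x t"
  unfolding dv_def[of W "\<lambda>x t. dv V f x t"] dv_def[of V "\<lambda>x t. dv W f x t"] Fz_dv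
  by (rule schwarz) (simp add: sf_Fz)

lemma dv_bil: assumes P: "bounded_bilinear pr" and f: "smooth_field f" and g: "smooth_field g"
  shows "dv W (\<lambda>y s. pr (f y s) (g y s)) x t = pr (f x t) (dv W g x t) + pr (dv W f x t) (g x t)"
proof -
  have "(Fz (\<lambda>y s. pr (f y s) (g y s)) has_derivative
     (\<lambda>h. pr (Fz f (x,t)) (frechet_derivative (Fz g) (at (x,t)) h) + pr (frechet_derivative (Fz f) (at (x,t)) h) (Fz g (x,t)))) (at (x,t))"
    using bounded_bilinear.FDERIV[OF P sf_diff[OF f, where z="(x,t)"] sf_diff[OF g, where z="(x,t)"]] by (simp add: Fz_def)
  from frechet_derivative_at[OF this, symmetric] show ?thesis by (simp add: dv_def)
qed

lemma dv_lin: assumes L: "bounded_linear L" and f: "smooth_field f"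
  shows "dv W (\<lambda>y s. L (f y s)) x t = L (dv W f x t)"
proof -
  have "(Fz (\<lambda>y s. L (f y s)) has_derivative (\<lambda>h. L (frechet_derivative (Fz f) (at (x,t)) h))) (at (x,t))"
    using bounded_linear.has_derivative[OF L sf_diff[OF f]] by (simp add: Fz_def)
  from frechet_derivative_at[OF this, symmetric] show ?thesis by (simp add: dv_def)
qed

lemma dv_const: "dv W (\<lambda>y s. c) x t = 0"
proof -
  have "(Fz (\<lambda>y s. c) has_derivative (\<lambda>h. 0)) (at (x,t))"
    by (simp add: Fz_def)
  from frechet_derivative_at[OF this, symmetric] show ?thesis by (simp add: dv_def)
qed

lemma dv_expand: assumes f: "smooth_field f"
  shows "dv (v, c) f x t = c *\<^sub>R dv T f x t + (\<Sum>k\<in>UNIV. (v $ k) *\<^sub>R dv (E k) f x t)"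
proof -
  have d: "(Fz f has_derivative frechet_derivative (Fz f) (at (x,t))) (at (x,t))" by (rule sf_diff[OF f])
  interpret linear "frechet_derivative (Fz f) (at (x,t))" using has_derivative_linear[OF d] .
  have hs: "frechet_derivative (Fz f) (at (x,t)) (c *\<^sub>R a, 0) = c *\<^sub>R frechet_derivative (Fz f) (at (x,t)) (a, 0)" for c a
    using scale[of c "(a,0)"] by simp
  have hs2: "frechet_derivative (Fz f) (at (x,t)) (0, c) = c *\<^sub>R frechet_derivative (Fz f) (at (x,t)) (0, 1)"
    using scale[of c "(0,1)"] by simp
  have "(v, c) = (0,c) + (\<Sum>j\<in>UNIV. (v $ j) *\<^sub>R (axis j 1, 0::real))"
    by (subst vec_decomp[of v]) (simp add: sum_prod sum_3)
  then have "frechet_derivative (Fz f) (at (x,t)) (v, c) = c *\<^sub>R frechet_derivative (Fz f) (at (x,t)) (0, 1) + (\<Sum>j\<in>UNIV. (v $ j) *\<^sub>R frechet_derivative (Fz f) (at (x,t)) (axis j 1, 0))"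
    by (simp add: add sum hs hs2)
  then show ?thesis by (simp add: dv_def)
qed



lemma dv_sum3: assumes g: "\<And>j. smooth_field (g j)"
  shows "dv W (\<lambda>y s. \<Sum>(j::3)\<in>UNIV. (g j y s :: 'b::real_normed_vector)) x t = (\<Sum>j\<in>UNIV. dv W (g j) x t)"
proof -
  have s12: "smooth_field (\<lambda>y s. g 1 y s + g 2 y s)" by (rule sf_add[OF g g])
  show ?thesis unfolding sum_3
    by (simp add: dv_add[OF s12 g] dv_add[OF g g])
qed

lemma dv_nth: assumes f: "smooth_field f"
  shows "dv W (\<lambda>y s. f y s $ i) x t = dv W f x t $ i"
  by (rule dv_lin[OF bounded_linear_vec_nth f])

lemma dv_chi_nth: assumes g: "\<And>i. smooth_field (g i)"
  shows "dv W (\<lambda>y s. (\<chi> i. g i y s) :: real^3) x t $ i = dv W (g i) x t"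
proof -
  have sc: "smooth_field (\<lambda>y s. (\<chi> i. g i y s) :: real^3)" by (rule sf_chi[OF g])
  show ?thesis using dv_nth[OF sc, where W=W and i=i and x=x and t=t] by simp
qed



lemma bl_cross: "bounded_linear (cross3 c)"
  by (rule bounded_bilinear.bounded_linear_right[OF bounded_bilinear_cross])

lemma part1:
  fixes u B a b :: "real^3 \<Rightarrow> real \<Rightarrow> real^3" and p \<theta> :: "real^3 \<Rightarrow> real \<Rightarrow> real"
  assumes su: "smooth_field u" and sp: "smooth_field p" and s\<theta>: "smooth_field \<theta>" and sB: "smooth_field B"
    and momentum: "\<And>y s. matder u u y s + 2 *\<^sub>R cross3 \<Omega> (u y s) + (a\<^sub>0 * \<theta> y s) *\<^sub>R kvec = - grad p y s"
    and Blagr: "matder u B x t = dirder B u x t"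
    and a_def: "\<And>y s. a y s = dirder B u y s"
    and b_def: "b x t = matder u a x t"
  shows "b x t = - (hessian p x t *v B x t)
      - dirder B (\<lambda>y s. 2 *\<^sub>R cross3 \<Omega> (u y s) + (a\<^sub>0 * \<theta> y s) *\<^sub>R kvec) x t"
proof -
  define W where "W = (u x t, 1::real)"
  have sG: "smooth_field (\<lambda>y s. dv V u y s)" for V by (rule sf_dv[OF su])
  have sBj: "smooth_field (\<lambda>y s. B y s $ j)" for j by (rule sf_comp_nth[OF sB])
  have suk: "smooth_field (\<lambda>y s. u y s $ j)" for j by (rule sf_comp_nth[OF su])
  have sterm: "smooth_field (\<lambda>y s. B y s $ j *\<^sub>R dv (E j) u y s)" for j
    by (rule sf_scaleR[OF sBj sG])
  have a_eq: "a = (\<lambda>y s. \<Sum>j\<in>UNIV. (B y s $ j) *\<^sub>R dv (E j) u y s)"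
    by (intro ext) (simp add: a_def dirder_def pd_eq[OF su])
  have sa: "smooth_field a" unfolding a_eq by (rule sf_sum3[OF sterm])
  have b1: "b x t = dv W a x t" unfolding b_def W_def by (rule matder_eq[OF sa])
  have dB: "dv W B x t = a x t"
    using Blagr a_def[of x t] matder_eq[OF sB, of u x t] by (simp add: W_def)
  have b2: "dv W a x t = (\<Sum>j\<in>UNIV. (B x t $ j) *\<^sub>R dv W (\<lambda>y s. dv (E j) u y s) x t
       + (a x t $ j) *\<^sub>R dv (E j) u x t)"
    unfolding a_eq dv_sum3[OF sterm] dv_bil[OF bounded_bilinear_scaleR sBj sG] dv_nth[OF sB]
    using dB a_eq by simp
  have dG: "dv W (\<lambda>y s. dv (E j) u y s) x t = dv (E j) (\<lambda>y s. dv T u y s) x t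
      + (\<Sum>k\<in>UNIV. (u x t $ k) *\<^sub>R dv (E j) (\<lambda>y s. dv (E k) u y s) x t)" for j
    unfolding W_def dv_expand[OF sG, where v="u x t" and c=1] by (simp add: dv_swap[OF su])
  have mom_f: "(\<lambda>y s. dv T u y s + (\<Sum>k\<in>UNIV. (u y s $ k) *\<^sub>R dv (E k) u y s)
       + (2 *\<^sub>R cross3 \<Omega> (u y s) + \<theta> y s *\<^sub>R (a\<^sub>0 *\<^sub>R kvec)))
      = (\<lambda>y s. - (\<chi> i. dv (E i) p y s))"
  proof (intro ext)
    fix y s
    show "dv T u y s + (\<Sum>k\<in>UNIV. (u y s $ k) *\<^sub>R dv (E k) u y s)
       + (2 *\<^sub>R cross3 \<Omega> (u y s) + \<theta> y s *\<^sub>R (a\<^sub>0 *\<^sub>R kvec)) = - (\<chi> i. dv (E i) p y s)"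
      using momentum[of y s] unfolding matder_eq[OF su] dv_expand[OF su, where v="u y s" and c=1] grad_def pd_eq[OF sp]
      by (simp add: algebra_simps)
  qed
  have smT: "smooth_field (\<lambda>y s. dv T u y s + (\<Sum>k\<in>UNIV. (u y s $ k) *\<^sub>R dv (E k) u y s))"
    by (rule sf_add[OF sG sf_sum3[OF sf_scaleR[OF suk sG]]])
  have sc: "smooth_field (\<lambda>y s. 2 *\<^sub>R cross3 \<Omega> (u y s) + \<theta> y s *\<^sub>R (a\<^sub>0 *\<^sub>R kvec))"
    by (rule sf_add[OF sf_scaleR[OF sf_const sf_lin[OF bl_cross su]] sf_scaleR[OF s\<theta> sf_const]])
  have dc: "dv V (\<lambda>y s. 2 *\<^sub>R cross3 \<Omega> (u y s) + \<theta> y s *\<^sub>R (a\<^sub>0 *\<^sub>R kvec)) x t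
     = 2 *\<^sub>R cross3 \<Omega> (dv V u x t) + dv V \<theta> x t *\<^sub>R (a\<^sub>0 *\<^sub>R kvec)" for V
    unfolding dv_add[OF sf_scaleR[OF sf_const sf_lin[OF bl_cross su]] sf_scaleR[OF s\<theta> sf_const]]
       dv_bil[OF bounded_bilinear_scaleR sf_const sf_lin[OF bl_cross su]] dv_bil[OF bounded_bilinear_scaleR s\<theta> sf_const]
       dv_lin[OF bl_cross su] dv_const by simp
  have mj: "dv (E j) (\<lambda>y s. dv T u y s) x t + (\<Sum>k\<in>UNIV. (u x t $ k) *\<^sub>R dv (E j) (\<lambda>y s. dv (E k) u y s) x t
        + (dv (E j) u x t $ k) *\<^sub>R dv (E k) u x t)
      + (2 *\<^sub>R cross3 \<Omega> (dv (E j) u x t) + dv (E j) \<theta> x t *\<^sub>R (a\<^sub>0 *\<^sub>R kvec))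
      = - (\<chi> i. dv (E j) (\<lambda>y s. dv (E i) p y s) x t)" for j
  proof -
    have "dv (E j) (\<lambda>y s. dv T u y s + (\<Sum>k\<in>UNIV. (u y s $ k) *\<^sub>R dv (E k) u y s)
       + (2 *\<^sub>R cross3 \<Omega> (u y s) + \<theta> y s *\<^sub>R (a\<^sub>0 *\<^sub>R kvec))) x t
       = dv (E j) (\<lambda>y s. - (\<chi> i. dv (E i) p y s)) x t" by (simp only: mom_f)
    moreover have "dv (E j) (\<lambda>y s. - (\<chi> i. dv (E i) p y s)) x t = - (\<chi> i. dv (E j) (\<lambda>y s. dv (E i) p y s) x t)"
    proof -
      have sp': "smooth_field (\<lambda>y s. (\<chi> i. dv (E i) p y s) :: real^3)" by (rule sf_chi[OF sf_dv[OF sp]])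
      have "dv (E j) (\<lambda>y s. - (\<chi> i. dv (E i) p y s)) x t = - dv (E j) (\<lambda>y s. (\<chi> i. dv (E i) p y s) :: real^3) x t"
        by (rule dv_lin[OF bounded_linear_minus[OF bounded_linear_ident] sp'])
      also have "\<dots> = - (\<chi> i. dv (E j) (\<lambda>y s. dv (E i) p y s) x t)"
        by (simp add: vec_eq_iff dv_chi_nth[OF sf_dv[OF sp]])
      finally show ?thesis .
    qed
    moreover have "dv (E j) (\<lambda>y s. dv T u y s + (\<Sum>k\<in>UNIV. (u y s $ k) *\<^sub>R dv (E k) u y s)
       + (2 *\<^sub>R cross3 \<Omega> (u y s) + \<theta> y s *\<^sub>R (a\<^sub>0 *\<^sub>R kvec))) x t
       = dv (E j) (\<lambda>y s. dv T u y s) x t + (\<Sum>k\<in>UNIV. (u x t $ k) *\<^sub>R dv (E j) (\<lambda>y s. dv (E k) u y s) x t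
        + (dv (E j) u x t $ k) *\<^sub>R dv (E k) u x t)
      + (2 *\<^sub>R cross3 \<Omega> (dv (E j) u x t) + dv (E j) \<theta> x t *\<^sub>R (a\<^sub>0 *\<^sub>R kvec))"
      unfolding dv_add[OF smT sc] dv_add[OF sG sf_sum3[OF sf_scaleR[OF suk sG]]] dc
        dv_sum3[OF sf_scaleR[OF suk sG]] dv_bil[OF bounded_bilinear_scaleR suk sG] dv_nth[OF su]
      by (simp add: sum.distrib)
    ultimately show ?thesis by simp
  qed
  have hij: "hessian p x t $ i $ j = dv (E j) (\<lambda>y s. dv (E i) p y s) x t" for i j
  proof -
    have "hessian p x t $ i $ j = dv (E i) (\<lambda>y s. dv (E j) p y s) x t"
      by (simp add: hessian_def pd_eq[OF sp] pd_eq[OF sf_dv[OF sp]])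
    also have "\<dots> = dv (E j) (\<lambda>y s. dv (E i) p y s) x t" by (rule dv_swap[OF sp])
    finally show ?thesis .
  qed
  have feq: "(\<lambda>y s. 2 *\<^sub>R cross3 \<Omega> (u y s) + (a\<^sub>0 * \<theta> y s) *\<^sub>R kvec)
     = (\<lambda>y s. 2 *\<^sub>R cross3 \<Omega> (u y s) + \<theta> y s *\<^sub>R (a\<^sub>0 *\<^sub>R kvec))" by (simp add: mult.commute)
  have dd: "dirder B (\<lambda>y s. 2 *\<^sub>R cross3 \<Omega> (u y s) + (a\<^sub>0 * \<theta> y s) *\<^sub>R kvec) x t
     = (\<Sum>j\<in>UNIV. (B x t $ j) *\<^sub>R (2 *\<^sub>R cross3 \<Omega> (dv (E j) u x t) + dv (E j) \<theta> x t *\<^sub>R (a\<^sub>0 *\<^sub>R kvec)))"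
    unfolding feq dirder_def pd_eq[OF sc] dc ..
  define G where "G j = dv (E j) u x t" for j
  define GT where "GT j = dv (E j) (\<lambda>y s. dv T u y s) x t" for j
  define GG where "GG j k = dv (E j) (\<lambda>y s. dv (E k) u y s) x t" for j k
  define C where "C j = 2 *\<^sub>R cross3 \<Omega> (dv (E j) u x t) + dv (E j) \<theta> x t *\<^sub>R (a\<^sub>0 *\<^sub>R kvec)" for j
  define PP where "PP j i = dv (E j) (\<lambda>y s. dv (E i) p y s) x t" for j i
  define Bv where "Bv = B x t"
  define uv where "uv = u x t"
  have m2: "GT j + (\<Sum>k\<in>UNIV. (uv $ k) *\<^sub>R GG j k) = - (\<chi> i. PP j i) - (\<Sum>k\<in>UNIV. (G j $ k) *\<^sub>R G k) - C j" for j
    using mj[of j] unfolding G_def GT_def GG_def C_def PP_def uv_def sum.distrib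
    by (simp add: algebra_simps)
  have bb: "b x t = (\<Sum>j\<in>UNIV. (Bv $ j) *\<^sub>R (GT j + (\<Sum>k\<in>UNIV. (uv $ k) *\<^sub>R GG j k))
        + ((\<Sum>k\<in>UNIV. (Bv $ k) *\<^sub>R G k) $ j) *\<^sub>R G j)"
  proof -
    have "b x t = (\<Sum>j\<in>UNIV. (B x t $ j) *\<^sub>R dv W (\<lambda>y s. dv (E j) u y s) x t
       + (a x t $ j) *\<^sub>R dv (E j) u x t)" using b1 b2 by simp
    also have "\<dots> = (\<Sum>j\<in>UNIV. (Bv $ j) *\<^sub>R (GT j + (\<Sum>k\<in>UNIV. (uv $ k) *\<^sub>R GG j k))
        + ((\<Sum>k\<in>UNIV. (Bv $ k) *\<^sub>R G k) $ j) *\<^sub>R G j)"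
      unfolding dG G_def GT_def GG_def Bv_def uv_def by (simp add: a_eq)
    finally show ?thesis .
  qed
  have hh: "hessian p x t *v B x t = (\<chi> i. \<Sum>j\<in>UNIV. PP j i * (Bv $ j))"
    by (simp add: matrix_vector_mult_def hij PP_def Bv_def)
  have dd2: "dirder B (\<lambda>y s. 2 *\<^sub>R cross3 \<Omega> (u y s) + (a\<^sub>0 * \<theta> y s) *\<^sub>R kvec) x t
     = (\<Sum>j\<in>UNIV. (Bv $ j) *\<^sub>R C j)" unfolding dd C_def Bv_def ..
  show ?thesis unfolding bb m2 hh dd2
    by (simp add: vec_eq_iff sum_3 algebra_simps)
qed



lemma bac_cab: "cross3 a (cross3 b c) = (a \<bullet> c) *\<^sub>R b - (a \<bullet> b) *\<^sub>R (c::real^3)"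
  by (simp add: cross3_simps forall_3)

lemma cross_cross_left: "cross3 (cross3 a b) c = (a \<bullet> c) *\<^sub>R b - (b \<bullet> c) *\<^sub>R (a::real^3)"
  by (simp add: cross3_simps forall_3)

lemma jacobi: "cross3 (cross3 d e) x + cross3 e (cross3 d x) = cross3 d (cross3 e (x::real^3))"
  by (simp add: cross3_simps forall_3)

lemma triple_cyc: "a \<bullet> cross3 b c = b \<bullet> cross3 c (a::real^3)"
  by (simp add: cross3_simps forall_3)

lemma perp_par:
  assumes e: "e \<bullet> e = 1" and ex: "e \<bullet> X = 0" and ey: "e \<bullet> Y = 0"
  shows "cross3 X Y = (e \<bullet> cross3 X Y) *\<^sub>R (e::real^3)"
proof -
  have "cross3 e (cross3 e (cross3 X Y)) = (e \<bullet> cross3 X Y) *\<^sub>R e - cross3 X Y"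
    using bac_cab[of e e "cross3 X Y"] e by simp
  moreover have "cross3 e (cross3 X Y) = 0" using bac_cab[of e X Y] ex ey by simp
  ultimately show ?thesis by simp
qed

lemma key_id:
  assumes e: "e \<bullet> e = 1" and ex: "e \<bullet> X = 0" and ey: "e \<bullet> Y = 0"
  shows "(X \<bullet> X) *\<^sub>R Y - (X \<bullet> Y) *\<^sub>R X = (e \<bullet> cross3 X Y) *\<^sub>R cross3 e (X::real^3)"
proof -
  have "(X \<bullet> X) *\<^sub>R Y - (X \<bullet> Y) *\<^sub>R X = cross3 (cross3 X Y) X"
    by (simp add: cross_cross_left inner_commute)
  also have "\<dots> = cross3 ((e \<bullet> cross3 X Y) *\<^sub>R e) X" using perp_par[OF e ex ey] by simp
  also have "\<dots> = (e \<bullet> cross3 X Y) *\<^sub>R cross3 e X" by (simp add: cross_mult_left)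
  finally show ?thesis .
qed

lemma frame_alg:
  fixes Bv av bv :: "real^3"
  assumes Bnz: "Bv \<noteq> 0"
    and nB: "nB = norm Bv" and e: "e = (1/nB) *\<^sub>R Bv"
    and X: "X = (1/nB) *\<^sub>R cross3 e av" and Y: "Y = (1/nB) *\<^sub>R cross3 e bv"
    and nX: "nX = norm X" and xh: "xh = (1/nX) *\<^sub>R X"
    and c: "c = e \<bullet> cross3 xh Y / nX" and D: "D = X + c *\<^sub>R e"
    and Xnz: "X \<noteq> 0"
  shows "(1/nB) *\<^sub>R av - ((Bv \<bullet> av)/nB^3) *\<^sub>R Bv = cross3 D e"
    and "(1/nX) *\<^sub>R (Y - k *\<^sub>R X) - ((X \<bullet> (Y - k *\<^sub>R X))/nX^3) *\<^sub>R X = cross3 D xh"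
    and "norm e = 1" "norm xh = 1" "e \<bullet> xh = 0" "norm (cross3 e xh) = 1"
    and "e \<bullet> cross3 e xh = 0" "xh \<bullet> cross3 e xh = 0"
proof -
  have nBp: "nB > 0" using Bnz nB by simp
  have nXp: "nX > 0" using Xnz nX by simp
  have ee: "e \<bullet> e = 1" using nBp unfolding e nB by (simp add: dot_square_norm power2_eq_square)
  show ne: "norm e = 1" using ee by (simp add: norm_eq_sqrt_inner)
  have Be: "Bv = nB *\<^sub>R e" using nBp by (simp add: e)
  have eX: "e \<bullet> X = 0" unfolding X by (simp add: dot_cross_self)
  have eY: "e \<bullet> Y = 0" unfolding Y by (simp add: dot_cross_self)
  have XX: "X \<bullet> X = nX^2" unfolding nX by (simp add: dot_square_norm)
  have "cross3 D e = cross3 X e" unfolding D by (simp add: cross_add_left cross_mult_left)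
  also have "\<dots> = (1/nB) *\<^sub>R ((e \<bullet> e) *\<^sub>R av - (av \<bullet> e) *\<^sub>R e)"
    unfolding X by (simp add: cross_mult_left cross_cross_left)
  also have "\<dots> = (1/nB) *\<^sub>R av - ((Bv \<bullet> av)/nB^3) *\<^sub>R Bv"
    using nBp by (simp add: ee Be inner_commute algebra_simps power3_eq_cube)
  finally show "(1/nB) *\<^sub>R av - ((Bv \<bullet> av)/nB^3) *\<^sub>R Bv = cross3 D e" ..
  have "(1/nX) *\<^sub>R (Y - k *\<^sub>R X) - ((X \<bullet> (Y - k *\<^sub>R X))/nX^3) *\<^sub>R X
     = (1/nX^3) *\<^sub>R ((X \<bullet> X) *\<^sub>R Y - (X \<bullet> Y) *\<^sub>R X)"
  proof -
    have sc: "X \<bullet> Y / (nX * (nX * nX)) = k / nX + (X \<bullet> Y - k * (nX * nX)) / (nX * (nX * nX))"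
      using nXp by (simp add: field_simps)
    show ?thesis
      using nXp apply (simp add: XX algebra_simps inner_diff_right power3_eq_cube power2_eq_square divide_simps)
      apply (subst sc) by (simp add: scaleR_add_left)
  qed
  also have "\<dots> = (1/nX^3) *\<^sub>R ((e \<bullet> cross3 X Y) *\<^sub>R cross3 e X)"
    by (simp add: key_id[OF ee eX eY])
  also have "\<dots> = cross3 D xh"
    unfolding D xh c using nXp
    by (simp add: cross_add_left cross_mult_left cross_mult_right power3_eq_cube)
  finally show "(1/nX) *\<^sub>R (Y - k *\<^sub>R X) - ((X \<bullet> (Y - k *\<^sub>R X))/nX^3) *\<^sub>R X = cross3 D xh" .
  show nx: "norm xh = 1" unfolding xh using nXp nX by simp
  show exh: "e \<bullet> xh = 0" unfolding xh by (simp add: eX)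
  have "(norm (cross3 e xh))\<^sup>2 + (e \<bullet> xh)\<^sup>2 = (norm e * norm xh)\<^sup>2" by (rule norm_cross_dot)
  then have "(norm (cross3 e xh))\<^sup>2 = 1\<^sup>2" using ne nx exh by simp
  then show "norm (cross3 e xh) = 1" using power2_eq_iff_nonneg[of "norm (cross3 e xh)" 1] by simp
  show "e \<bullet> cross3 e xh = 0" "xh \<bullet> cross3 e xh = 0" by (simp_all add: dot_cross_self)
qed



lemma has_derivative_normalize:
  fixes f :: "'a::real_normed_vector \<Rightarrow> 'b::real_inner"
  assumes f: "(f has_derivative f') (at z)" and nz: "f z \<noteq> 0"
  shows "((\<lambda>z. (1/norm (f z)) *\<^sub>R f z) has_derivative
     (\<lambda>v. (1/norm (f z)) *\<^sub>R f' v - ((f z \<bullet> f' v)/(norm (f z))^3) *\<^sub>R f z)) (at z)"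
proof -
  have n: "((\<lambda>z. norm (f z)) has_derivative (\<lambda>v. f' v \<bullet> sgn (f z))) (at z)"
    using has_derivative_compose[OF f has_derivative_norm[OF nz]] .
  have i: "((\<lambda>z. inverse (norm (f z))) has_derivative
      (\<lambda>v. - (inverse (norm (f z)) * (f' v \<bullet> sgn (f z)) * inverse (norm (f z))))) (at z)"
    by (rule Deriv.has_derivative_inverse[OF _ n]) (use nz in simp)
  have "((\<lambda>z. inverse (norm (f z)) *\<^sub>R f z) has_derivative
     (\<lambda>v. inverse (norm (f z)) *\<^sub>R f' v + (- (inverse (norm (f z)) * (f' v \<bullet> sgn (f z)) * inverse (norm (f z)))) *\<^sub>R f z)) (at z)"
    by (rule has_derivative_scaleR[OF i f])
  moreover have "(\<lambda>v. inverse (norm (f z)) *\<^sub>R f' v + (- (inverse (norm (f z)) * (f' v \<bullet> sgn (f z)) * inverse (norm (f z)))) *\<^sub>R f z)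
     = (\<lambda>v. (1/norm (f z)) *\<^sub>R f' v - ((f z \<bullet> f' v)/(norm (f z))^3) *\<^sub>R f z)"
  proof
    fix v
    have "f' v \<bullet> sgn (f z) = (f z \<bullet> f' v) / norm (f z)"
      by (simp add: sgn_div_norm inner_commute divide_inverse mult.commute)
    then show "inverse (norm (f z)) *\<^sub>R f' v + (- (inverse (norm (f z)) * (f' v \<bullet> sgn (f z)) * inverse (norm (f z)))) *\<^sub>R f z
     = (1/norm (f z)) *\<^sub>R f' v - ((f z \<bullet> f' v)/(norm (f z))^3) *\<^sub>R f z"
      by (simp add: power3_eq_cube divide_inverse algebra_simps)
  qed
  ultimately show ?thesis by (simp add: divide_inverse)
qed

lemma has_derivative_invnorm:
  fixes f :: "'a::real_normed_vector \<Rightarrow> 'b::real_inner"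
  assumes f: "(f has_derivative f') (at z)" and nz: "f z \<noteq> 0"
  shows "((\<lambda>z. 1/norm (f z)) has_derivative (\<lambda>v. - ((f z \<bullet> f' v)/(norm (f z))^3))) (at z)"
proof -
  have n: "((\<lambda>z. norm (f z)) has_derivative (\<lambda>v. f' v \<bullet> sgn (f z))) (at z)"
    using has_derivative_compose[OF f has_derivative_norm[OF nz]] .
  have i: "((\<lambda>z. inverse (norm (f z))) has_derivative
      (\<lambda>v. - (inverse (norm (f z)) * (f' v \<bullet> sgn (f z)) * inverse (norm (f z))))) (at z)"
    by (rule Deriv.has_derivative_inverse[OF _ n]) (use nz in simp)
  moreover have "(\<lambda>v. - (inverse (norm (f z)) * (f' v \<bullet> sgn (f z)) * inverse (norm (f z))))
      = (\<lambda>v. - ((f z \<bullet> f' v)/(norm (f z))^3))"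
    by (rule ext) (simp add: sgn_div_norm inner_commute divide_inverse power3_eq_cube algebra_simps)
  ultimately show ?thesis by (simp add: divide_inverse)
qed

lemma field_normalize:
  assumes "(Fz f has_derivative D) (at P)" and "Fz f P \<noteq> 0"
  shows "(Fz (\<lambda>y s. (1/norm (f y s)) *\<^sub>R f y s) has_derivative
     (\<lambda>v. (1/norm (Fz f P)) *\<^sub>R D v - ((Fz f P \<bullet> D v)/(norm (Fz f P))^3) *\<^sub>R Fz f P)) (at P)"
  using has_derivative_normalize[OF assms] by (simp add: Fz_def)

lemma part2:
  fixes u B a b \<chi>a \<chi>b Da :: "real^3 \<Rightarrow> real \<Rightarrow> real^3"
  assumes sB: "smooth_field B" and sa: "smooth_field a"
    and Blagr: "matder u B x t = dirder B u x t"
    and a_at: "a x t = dirder B u x t"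
    and b_at: "b x t = matder u a x t"
    and \<chi>a_def: "\<And>y s. \<chi>a y s = (1 / norm (B y s)) *\<^sub>R
                          cross3 ((1 / norm (B y s)) *\<^sub>R B y s) (a y s)"
    and \<chi>b_def: "\<And>y s. \<chi>b y s = (1 / norm (B y s)) *\<^sub>R
                          cross3 ((1 / norm (B y s)) *\<^sub>R B y s) (b y s)"
    and Da_def: "\<And>y s. Da y s = \<chi>a y s +
           (((1 / norm (B y s)) *\<^sub>R B y s) \<bullet>
               cross3 ((1 / norm (\<chi>a y s)) *\<^sub>R \<chi>a y s) (\<chi>b y s) / norm (\<chi>a y s))
             *\<^sub>R ((1 / norm (B y s)) *\<^sub>R B y s)"
    and B_nz: "B x t \<noteq> 0"
    and \<chi>a_nz: "\<chi>a x t \<noteq> 0"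
  shows "let Bh = (\<lambda>y s. (1 / norm (B y s)) *\<^sub>R B y s);
           \<chi>h = (\<lambda>y s. (1 / norm (\<chi>a y s)) *\<^sub>R \<chi>a y s);
           Ch = (\<lambda>y s. cross3 (Bh y s) (\<chi>h y s))
       in norm (Bh x t) = 1 \<and> norm (\<chi>h x t) = 1 \<and> norm (Ch x t) = 1
        \<and> Bh x t \<bullet> \<chi>h x t = 0 \<and> Bh x t \<bullet> Ch x t = 0 \<and> \<chi>h x t \<bullet> Ch x t = 0
        \<and> matder u Bh x t = cross3 (Da x t) (Bh x t)
        \<and> matder u Ch x t = cross3 (Da x t) (Ch x t)
        \<and> matder u \<chi>h x t = cross3 (Da x t) (\<chi>h x t)"
proof -
  define P where "P = (x,t)"
  define W where "W = (u x t, 1::real)"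
  define DB where "DB = frechet_derivative (Fz B) (at P)"
  define DA where "DA = frechet_derivative (Fz a) (at P)"
  have hB: "(Fz B has_derivative DB) (at P)" unfolding DB_def by (rule sf_diff[OF sB])
  have hA: "(Fz a has_derivative DA) (at P)" unfolding DA_def by (rule sf_diff[OF sa])
  have DBW: "DB (u x t, 1) = a x t" using matder_dv[OF hB[unfolded P_def], of u] Blagr a_at by (simp add: W_def)
  have DAW: "DA (u x t, 1) = b x t" using matder_dv[OF hA[unfolded P_def], of u] b_at by (simp add: W_def)
  define Bv where "Bv = B x t"
  define av where "av = a x t"
  define bv where "bv = b x t"
  define nB where "nB = norm Bv"
  define e where "e = (1/nB) *\<^sub>R Bv"
  define X where "X = (1/nB) *\<^sub>R cross3 e av"
  define Y where "Y = (1/nB) *\<^sub>R cross3 e bv"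
  define nX where "nX = norm X"
  define xh where "xh = (1/nX) *\<^sub>R X"
  define c where "c = e \<bullet> cross3 xh Y / nX"
  define D where "D = X + c *\<^sub>R e"
  have FBP: "Fz B P = Bv" by (simp add: P_def Bv_def)
  have FAP: "Fz a P = av" by (simp add: P_def av_def)
  have Xeq: "\<chi>a x t = X" by (simp add: \<chi>a_def X_def e_def nB_def Bv_def av_def)
  have Yeq: "\<chi>b x t = Y" by (simp add: \<chi>b_def Y_def e_def nB_def Bv_def bv_def)
  have Deq: "Da x t = D" by (simp add: Da_def Xeq Yeq D_def c_def xh_def nX_def e_def nB_def Bv_def)
  have Xnz: "X \<noteq> 0" using \<chi>a_nz Xeq by simp
  have Bnz: "Bv \<noteq> 0" using B_nz Bv_def by simp
  note alg = frame_alg[OF Bnz nB_def e_def X_def Y_def nX_def xh_def c_def D_def Xnz]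
  define DBh where "DBh = (\<lambda>v. (1/nB) *\<^sub>R DB v - ((Bv \<bullet> DB v)/nB^3) *\<^sub>R Bv)"
  have hBh: "(Fz (\<lambda>y s. (1 / norm (B y s)) *\<^sub>R B y s) has_derivative DBh) (at P)"
    using field_normalize[OF hB] Bnz by (simp add: FBP DBh_def nB_def)
  have mBh: "matder u (\<lambda>y s. (1 / norm (B y s)) *\<^sub>R B y s) x t = cross3 D e"
    using matder_dv[OF hBh[unfolded P_def], of u] alg(1) by (simp add: DBh_def DBW W_def av_def)
  have BhP: "(1 / norm (B x t)) *\<^sub>R B x t = e" by (simp add: e_def nB_def Bv_def)
  have BhP: "(1 / norm (B x t)) *\<^sub>R B x t = e" by (simp add: e_def nB_def Bv_def)
  have hinv: "((\<lambda>z. 1/norm (Fz B z)) has_derivative (\<lambda>v. - ((Bv \<bullet> DB v)/nB^3))) (at P)"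
    using has_derivative_invnorm[OF hB] Bnz by (simp add: FBP nB_def)
  have hBh': "((\<lambda>z. (1/norm (Fz B z)) *\<^sub>R Fz B z) has_derivative DBh) (at P)"
    using hBh by (simp add: Fz_def)
  have hcr: "((\<lambda>z. cross3 ((1/norm (Fz B z)) *\<^sub>R Fz B z) (Fz a z)) has_derivative
      (\<lambda>v. cross3 e (DA v) + cross3 (DBh v) av)) (at P)"
    using bounded_bilinear.FDERIV[OF bounded_bilinear_cross hBh' hA] by (simp add: FBP FAP e_def nB_def)
  define DX where "DX = (\<lambda>v. (1/nB) *\<^sub>R (cross3 e (DA v) + cross3 (DBh v) av) + (- ((Bv \<bullet> DB v)/nB^3)) *\<^sub>R cross3 e av)"
  have hX0: "((\<lambda>z. (1/norm (Fz B z)) *\<^sub>R cross3 ((1/norm (Fz B z)) *\<^sub>R Fz B z) (Fz a z)) has_derivative DX) (at P)"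
    using has_derivative_scaleR[OF hinv hcr] by (simp add: DX_def FBP FAP nB_def e_def)
  have hX: "(Fz \<chi>a has_derivative DX) (at P)"
  proof -
    have "Fz \<chi>a = (\<lambda>z. (1/norm (Fz B z)) *\<^sub>R cross3 ((1/norm (Fz B z)) *\<^sub>R Fz B z) (Fz a z))"
      by (rule ext) (simp add: Fz_def \<chi>a_def)
    then show ?thesis using hX0 by simp
  qed
  define k where "k = 2 * (Bv \<bullet> av) / nB^2"
  have nBp: "nB > 0" using Bnz by (simp add: nB_def)
  have Be: "Bv = nB *\<^sub>R e" using nBp by (simp add: e_def)
  have DXW: "DX (u x t, 1) = Y - k *\<^sub>R X"
  proof -
    have "DX (u x t, 1) = (1/nB) *\<^sub>R (cross3 e bv + cross3 ((1/nB) *\<^sub>R av - ((Bv \<bullet> av)/nB^3) *\<^sub>R Bv) av)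
        + (- ((Bv \<bullet> av)/nB^3)) *\<^sub>R cross3 e av"
      by (simp add: DX_def DBh_def DBW DAW bv_def av_def)
    also have "\<dots> = Y - k *\<^sub>R X"
    proof -
      have cx: "cross3 ((1/nB) *\<^sub>R av - ((Bv \<bullet> av)/nB^3) *\<^sub>R Bv) av = - ((Bv \<bullet> av)/nB^2) *\<^sub>R cross3 e av"
      proof -
        have "cross3 ((1/nB) *\<^sub>R av - ((Bv \<bullet> av)/nB^3) *\<^sub>R Bv) av
            = (1/nB) *\<^sub>R cross3 av av - ((Bv \<bullet> av)/nB^3) *\<^sub>R cross3 Bv av"
          by (simp only: Cross3.left_diff_distrib cross_mult_left)
        also have "\<dots> = - (((Bv \<bullet> av)/nB^3) * nB) *\<^sub>R cross3 e av"
          by (subst (2) Be) (simp add: cross_mult_left)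
        also have "((Bv \<bullet> av)/nB^3) * nB = (Bv \<bullet> av)/nB^2"
          using nBp by (simp add: power2_eq_square power3_eq_cube)
        finally show ?thesis by simp
      qed
      have "(1/nB) *\<^sub>R (cross3 e bv + cross3 ((1/nB) *\<^sub>R av - ((Bv \<bullet> av)/nB^3) *\<^sub>R Bv) av)
        + (- ((Bv \<bullet> av)/nB^3)) *\<^sub>R cross3 e av
        = Y - ((Bv \<bullet> av)/nB^3 + (Bv \<bullet> av)/nB^3) *\<^sub>R cross3 e av"
      proof -
        have comb: "(1/n) *\<^sub>R (p + - (\<alpha> *\<^sub>R q)) + (- \<beta>) *\<^sub>R q = (1/n) *\<^sub>R p - (\<alpha>/n + \<beta>) *\<^sub>R q"
          for n \<alpha> \<beta> :: real and p q :: "real^3"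
          by (simp add: algebra_simps)
        have sc: "(Bv \<bullet> av)/nB^2 / nB + (Bv \<bullet> av)/nB^3 = (Bv \<bullet> av)/nB^3 + (Bv \<bullet> av)/nB^3"
          using nBp by (simp add: power2_eq_square power3_eq_cube)
        have comb2: "(1/n) *\<^sub>R (p - \<alpha> *\<^sub>R q) - \<beta> *\<^sub>R q = (1/n) *\<^sub>R p - (\<alpha>/n + \<beta>) *\<^sub>R q"
          for n \<alpha> \<beta> :: real and p q :: "real^3"
          by (simp add: algebra_simps)
        show ?thesis unfolding cx Y_def apply simp apply (simp only: comb2) using sc by simp
      qed
      also have "(Bv \<bullet> av)/nB^3 + (Bv \<bullet> av)/nB^3 = k * (1/nB)"
        unfolding k_def using nBp by (simp add: power2_eq_square power3_eq_cube field_simps)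
      finally show ?thesis by (simp add: X_def)
    qed
    finally show ?thesis .
  qed
  have FXP: "Fz \<chi>a P = X" by (simp add: P_def Xeq)
  define Dxh where "Dxh = (\<lambda>v. (1/nX) *\<^sub>R DX v - ((X \<bullet> DX v)/nX^3) *\<^sub>R X)"
  have hxh: "(Fz (\<lambda>y s. (1 / norm (\<chi>a y s)) *\<^sub>R \<chi>a y s) has_derivative Dxh) (at P)"
    using field_normalize[OF hX] Xnz by (simp add: FXP Dxh_def nX_def)
  have mxh: "matder u (\<lambda>y s. (1 / norm (\<chi>a y s)) *\<^sub>R \<chi>a y s) x t = cross3 D xh"
    using matder_dv[OF hxh[unfolded P_def], of u] alg(2)[of k] by (simp add: Dxh_def DXW)
  have hBh2: "((\<lambda>z. (1 / norm (B (fst z) (snd z))) *\<^sub>R B (fst z) (snd z)) has_derivative DBh) (at P)"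
    using hBh by (simp add: Fz_def)
  have hxh2: "((\<lambda>z. (1 / norm (\<chi>a (fst z) (snd z))) *\<^sub>R \<chi>a (fst z) (snd z)) has_derivative Dxh) (at P)"
    using hxh by (simp add: Fz_def)
  have xhP: "(1 / norm (\<chi>a x t)) *\<^sub>R \<chi>a x t = xh" by (simp add: Xeq xh_def nX_def)
  have hCh: "(Fz (\<lambda>y s. cross3 ((1 / norm (B y s)) *\<^sub>R B y s) ((1 / norm (\<chi>a y s)) *\<^sub>R \<chi>a y s))
      has_derivative (\<lambda>v. cross3 e (Dxh v) + cross3 (DBh v) xh)) (at P)"
    using bounded_bilinear.FDERIV[OF bounded_bilinear_cross hBh2 hxh2]
    by (simp add: Fz_def P_def BhP xhP)
  have DBhW: "DBh (u x t, 1) = cross3 D e"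
    using alg(1) by (simp add: DBh_def DBW av_def)
  have DxhW: "Dxh (u x t, 1) = cross3 D xh"
    using alg(2)[of k] by (simp add: Dxh_def DXW)
  have mCh: "matder u (\<lambda>y s. cross3 ((1 / norm (B y s)) *\<^sub>R B y s) ((1 / norm (\<chi>a y s)) *\<^sub>R \<chi>a y s)) x t
      = cross3 D (cross3 e xh)"
    using matder_dv[OF hCh[unfolded P_def], of u] jacobi[of D e xh] DBhW DxhW by (simp add: add.commute)
  show ?thesis
    unfolding Let_def BhP xhP Deq mBh mxh mCh
    using alg(3-8) by (simp add: inner_commute)
qed


theorem theorem1:
  fixes u :: "real^3 \<Rightarrow> real \<Rightarrow> real^3"
    and p \<theta> :: "real^3 \<Rightarrow> real \<Rightarrow> real"
    and \<Omega> :: "real^3" and a\<^sub>0 :: real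
    and Q :: "real \<Rightarrow> real"
    and q :: "real^3 \<Rightarrow> real \<Rightarrow> real"
    and B a b \<chi>a \<chi>b Ba\<chi> :: "real^3 \<Rightarrow> real \<Rightarrow> real^3"
    and Da :: "real^3 \<Rightarrow> real \<Rightarrow> real^3"
    and x :: "real^3" and t :: real
  assumes smooth_u: "smooth_field u"
    and smooth_p: "smooth_field p"
    and smooth_\<theta>: "smooth_field \<theta>"
    and smooth_Q: "smooth Q"
    and momentum: "\<And>y s. matder u u y s + 2 *\<^sub>R cross3 \<Omega> (u y s) + (a\<^sub>0 * \<theta> y s) *\<^sub>R kvec
                     = - grad p y s"
    and incompressible: "\<And>y s. divg u y s = 0"
    and transport: "\<And>y s. matder u \<theta> y s = 0"
    and q_def: "\<And>y s. q y s = (curl u y s + 2 *\<^sub>R \<Omega>) \<bullet> grad \<theta> y s"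
    and B_def: "\<And>y s. B y s = cross3 (grad (\<lambda>y' s'. Q (q y' s')) y s) (grad \<theta> y s)"
    and B_lagr: "\<And>y s. matder u B y s = dirder B u y s"
    and B_div: "\<And>y s. divg B y s = 0"
    and a_def: "\<And>y s. a y s = dirder B u y s"
    and b_def: "\<And>y s. b y s = matder u a y s"
    and \<chi>a_def: "\<And>y s. \<chi>a y s = (1 / norm (B y s)) *\<^sub>R
                          cross3 ((1 / norm (B y s)) *\<^sub>R B y s) (a y s)"
    and \<chi>b_def: "\<And>y s. \<chi>b y s = (1 / norm (B y s)) *\<^sub>R
                          cross3 ((1 / norm (B y s)) *\<^sub>R B y s) (b y s)"
    and Da_def: "\<And>y s. Da y s = \<chi>a y s +
           (((1 / norm (B y s)) *\<^sub>R B y s) \<bullet>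
               cross3 ((1 / norm (\<chi>a y s)) *\<^sub>R \<chi>a y s) (\<chi>b y s) / norm (\<chi>a y s))
             *\<^sub>R ((1 / norm (B y s)) *\<^sub>R B y s)"
    and B_nz: "B x t \<noteq> 0"
    and \<chi>a_nz: "\<chi>a x t \<noteq> 0"
  shows "b x t = - (hessian p x t *v B x t)
                 - dirder B (\<lambda>y s. 2 *\<^sub>R cross3 \<Omega> (u y s) + (a\<^sub>0 * \<theta> y s) *\<^sub>R kvec) x t
     \<and> (let Bh = (\<lambda>y s. (1 / norm (B y s)) *\<^sub>R B y s);
           \<chi>h = (\<lambda>y s. (1 / norm (\<chi>a y s)) *\<^sub>R \<chi>a y s);
           Ch = (\<lambda>y s. cross3 (Bh y s) (\<chi>h y s))
       in norm (Bh x t) = 1 \<and> norm (\<chi>h x t) = 1 \<and> norm (Ch x t) = 1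
        \<and> Bh x t \<bullet> \<chi>h x t = 0 \<and> Bh x t \<bullet> Ch x t = 0 \<and> \<chi>h x t \<bullet> Ch x t = 0
        \<and> matder u Bh x t = cross3 (Da x t) (Bh x t)
        \<and> matder u Ch x t = cross3 (Da x t) (Ch x t)
        \<and> matder u \<chi>h x t = cross3 (Da x t) (\<chi>h x t))"
proof -
  have qeq: "q = (\<lambda>y s. (curl u y s + 2 *\<^sub>R \<Omega>) \<bullet> grad \<theta> y s)"
    by (intro ext) (rule q_def)
  have sq: "smooth_field q" unfolding qeq
    by (rule sf_bil[OF bounded_bilinear_inner sf_add[OF sf_curl[OF smooth_u] sf_const] sf_grad[OF smooth_\<theta>]])
  have sQq: "smooth_field (\<lambda>y' s'. Q (q y' s'))" by (rule sf_comp[OF smooth_Q sq])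
  have Beq: "B = (\<lambda>y s. cross3 (grad (\<lambda>y' s'. Q (q y' s')) y s) (grad \<theta> y s))"
    by (intro ext) (rule B_def)
  have sB: "smooth_field B" unfolding Beq
    by (rule sf_bil[OF bounded_bilinear_cross sf_grad[OF sQq] sf_grad[OF smooth_\<theta>]])
  have a_eq: "a = (\<lambda>y s. \<Sum>j\<in>UNIV. (B y s $ j) *\<^sub>R dv (E j) u y s)"
    by (intro ext) (simp add: a_def dirder_def pd_eq[OF smooth_u])
  have sa: "smooth_field a" unfolding a_eq
    by (rule sf_sum3[OF sf_scaleR[OF sf_comp_nth[OF sB] sf_dv[OF smooth_u]]])
  have p1: "b x t = - (hessian p x t *v B x t)
                 - dirder B (\<lambda>y s. 2 *\<^sub>R cross3 \<Omega> (u y s) + (a\<^sub>0 * \<theta> y s) *\<^sub>R kvec) x t"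
    by (rule part1[OF smooth_u smooth_p smooth_\<theta> sB momentum B_lagr a_def b_def])
  have p2: "let Bh = (\<lambda>y s. (1 / norm (B y s)) *\<^sub>R B y s);
           \<chi>h = (\<lambda>y s. (1 / norm (\<chi>a y s)) *\<^sub>R \<chi>a y s);
           Ch = (\<lambda>y s. cross3 (Bh y s) (\<chi>h y s))
       in norm (Bh x t) = 1 \<and> norm (\<chi>h x t) = 1 \<and> norm (Ch x t) = 1
        \<and> Bh x t \<bullet> \<chi>h x t = 0 \<and> Bh x t \<bullet> Ch x t = 0 \<and> \<chi>h x t \<bullet> Ch x t = 0
        \<and> matder u Bh x t = cross3 (Da x t) (Bh x t)
        \<and> matder u Ch x t = cross3 (Da x t) (Ch x t)
        \<and> matder u \<chi>h x t = cross3 (Da x t) (\<chi>h x t)"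
    by (rule part2[OF sB sa B_lagr a_def b_def \<chi>a_def \<chi>b_def Da_def B_nz \<chi>a_nz])
  show ?thesis using p1 p2 by blast
qed

end
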